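(* Let $G=(V,E)$ be a directed multigraph with arc costs $c$ and gains $\gamma>0$, $u\in V$, and let $G_u$ and $f$ be as in the context. Let $\delta^{(1)}>\delta^{(2)}>\dots>\delta^{(\ell)}$ be real numbers, and for each $i\in[\ell]$ let $P^{(i)}$ be a $u$-$u'$ path in $G_u$ such that the unit flow on $P^{(i)}$ is an optimal solution of the primal LP for $f(\delta^{(i)})$. Then the sequence $(P^{(1)},\dots,P^{(\ell)})$ satisfies subpath monotonicity at $u$: for all $i<j$ and every node $v\ne u$ lying on both $P^{(i)}$ and $P^{(j)}$, $\gamma(P^{(i)}_{uv})\le\gamma(P^{(j)}_{uv})$.
   Context: $G_u$ is obtained from $G$ by splitting $u$ into $u$ (keeping its outgoing arcs) and a new node $u'$ to which all arcs entering $u$ are redirected (with the same costs and gains). For a walk $P$ with arcs $e_1,\dots,e_k$: $c(P):=\sum_i(\prod_{j<i}\gamma_{e_j})c_{e_i}$, $\gamma(P):=\prod_i\gamma_{e_i}$; $P_{uv}$ is the subpath of $P$ from $u$ to $v$. $\mathcal{D}:=\{x\in\mathbb{R}^E_{\ge0}: x(\delta^+(u))=1,\ \sum_{e\in\delta^+(v)}x_e-\sum_{e\in\delta^-(v)}\gamma_ex_e=0\ \forall v\ne u\}$; the primal LP for $f(\delta)$ is $\min\{c^\top x+\delta\sum_{e\in\delta^-(u)}\gamma_ex_e-\delta: x\in\mathcal{D}\}$, with value $f(\delta)$. The unit flow on a $u$-$u'$ path $P$ with arcs $e_1,\dots,e_k$ is the vector $x$ with $x_{e_i}:=\prod_{j<i}\gamma_{e_j}$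 on the corresponding arcs of $G$ and $0$ elsewhere. *)

theory Defs
  imports Complex_Main
begin

text \<open>In the split graph G_u,
  nodes are represented as 'v option: Some v is the original node v, and
  None is the new node u'.\<close>

definition split_head :: "('e \<Rightarrow> 'v) \<Rightarrow> 'v \<Rightarrow> 'e \<Rightarrow> 'v option" where
  "split_head head u e = (if head e = u then None else Some (head e))"

definition split_tail :: "('e \<Rightarrow> 'v) \<Rightarrow> 'e \<Rightarrow> 'v option" where
  "split_tail tail e = Some (tail e)"

definition split_nodes :: "('e \<Rightarrow> 'v) \<Rightarrow> ('e \<Rightarrow> 'v) \<Rightarrow> 'v \<Rightarrow> 'e list \<Rightarrow> 'v option list" where
  "split_nodes tail head u P = split_tail tail (P ! 0) # map (split_head head u) P"

definition is_split_path :: "'e set \<Rightarrow> ('e \<Rightarrow> 'v) \<Rightarrow> ('e \<Rightarrow> 'v) \<Rightarrow> 'v \<Rightarrow> 'e list \<Rightarrow> bool" where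
  "is_split_path E tail head u P \<longleftrightarrow>
     P \<noteq> [] \<and> set P \<subseteq> E \<and>
     split_tail tail (P ! 0) = Some u \<and>
     split_head head u (last P) = None \<and>
     (\<forall>i. Suc i < length P \<longrightarrow> split_head head u (P ! i) = split_tail tail (P ! Suc i)) \<and>
     distinct (split_nodes tail head u P)"

definition walk_gain :: "('e \<Rightarrow> real) \<Rightarrow> 'e list \<Rightarrow> real" where
  "walk_gain \<gamma> P = prod_list (map \<gamma> P)"

definition subpath_to :: "('e \<Rightarrow> 'v) \<Rightarrow> 'e list \<Rightarrow> 'v \<Rightarrow> 'e list" where
  "subpath_to head P v = take (Suc (LEAST k. k < length P \<and> head (P ! k) = v)) P"

definition unit_flow :: "('e \<Rightarrow> real) \<Rightarrow> 'e list \<Rightarrow> 'e \<Rightarrow> real" where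
  "unit_flow \<gamma> P e = (\<Sum>i<length P. if P ! i = e then prod_list (map \<gamma> (take i P)) else 0)"

definition in_D :: "'v set \<Rightarrow> 'e set \<Rightarrow> ('e \<Rightarrow> 'v) \<Rightarrow> ('e \<Rightarrow> 'v) \<Rightarrow> ('e \<Rightarrow> real) \<Rightarrow> 'v
                    \<Rightarrow> ('e \<Rightarrow> real) \<Rightarrow> bool" where
  "in_D V E tail head \<gamma> u x \<longleftrightarrow>
     (\<forall>e\<in>E. 0 \<le> x e) \<and>
     (\<Sum>e\<in>{e\<in>E. tail e = u}. x e) = 1 \<and>
     (\<forall>v\<in>V. v \<noteq> u \<longrightarrow>
        (\<Sum>e\<in>{e\<in>E. tail e = v}. x e) - (\<Sum>e\<in>{e\<in>E. head e = v}. \<gamma> e * x e) = 0)"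

definition lp_obj :: "'e set \<Rightarrow> ('e \<Rightarrow> 'v) \<Rightarrow> ('e \<Rightarrow> real) \<Rightarrow> ('e \<Rightarrow> real) \<Rightarrow> 'v \<Rightarrow> real
                      \<Rightarrow> ('e \<Rightarrow> real) \<Rightarrow> real" where
  "lp_obj E head c \<gamma> u \<delta> x =
     (\<Sum>e\<in>E. c e * x e) + \<delta> * (\<Sum>e\<in>{e\<in>E. head e = u}. \<gamma> e * x e) - \<delta>"

definition lp_optimal :: "'v set \<Rightarrow> 'e set \<Rightarrow> ('e \<Rightarrow> 'v) \<Rightarrow> ('e \<Rightarrow> 'v) \<Rightarrow> ('e \<Rightarrow> real)
                          \<Rightarrow> ('e \<Rightarrow> real) \<Rightarrow> 'v \<Rightarrow> real \<Rightarrow> ('e \<Rightarrow> real) \<Rightarrow> bool" where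
  "lp_optimal V E tail head c \<gamma> u \<delta> x \<longleftrightarrow>
     in_D V E tail head \<gamma> u x \<and>
     (\<forall>y. in_D V E tail head \<gamma> u y \<longrightarrow> lp_obj E head c \<gamma> u \<delta> x \<le> lp_obj E head c \<gamma> u \<delta> y)"

definition subpath_monotone :: "('e \<Rightarrow> 'v) \<Rightarrow> ('e \<Rightarrow> real) \<Rightarrow> 'v \<Rightarrow> nat \<Rightarrow> (nat \<Rightarrow> 'e list) \<Rightarrow> bool" where
  "subpath_monotone head \<gamma> u l P \<longleftrightarrow>
     (\<forall>i j v. i < j \<and> j < l \<and> v \<noteq> u \<and> v \<in> head ` set (P i) \<and> v \<in> head ` set (P j) \<longrightarrow>
        walk_gain \<gamma> (subpath_to head (P i) v) \<le> walk_gain \<gamma> (subpath_to head (P j) v))"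

end

theory Submission
  imports Defs
begin

definition gw :: "'e set \<Rightarrow> ('e \<Rightarrow> 'v) \<Rightarrow> ('e \<Rightarrow> 'v) \<Rightarrow> 'v \<Rightarrow> 'e list \<Rightarrow> bool" where
  "gw E tail head u Q \<longleftrightarrow> Q \<noteq> [] \<and> set Q \<subseteq> E \<and> tail (Q!0) = u \<and>
     (\<forall>k<length Q. head (Q!k) = u \<longleftrightarrow> k = length Q - 1) \<and>
     (\<forall>k. Suc k < length Q \<longrightarrow> head (Q!k) = tail (Q!Suc k))"

definition pw :: "'e set \<Rightarrow> ('e \<Rightarrow> 'v) \<Rightarrow> ('e \<Rightarrow> 'v) \<Rightarrow> 'v \<Rightarrow> 'v \<Rightarrow> 'e list \<Rightarrow> bool" where
  "pw E tail head u v A \<longleftrightarrow> A \<noteq> [] \<and> set A \<subseteq> E \<and> tail (A!0) = u \<and> head (last A) = v \<and>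
     (\<forall>k<length A. head (A!k) \<noteq> u) \<and>
     (\<forall>k. Suc k < length A \<longrightarrow> head (A!k) = tail (A!Suc k))"

definition sw :: "'e set \<Rightarrow> ('e \<Rightarrow> 'v) \<Rightarrow> ('e \<Rightarrow> 'v) \<Rightarrow> 'v \<Rightarrow> 'v \<Rightarrow> 'e list \<Rightarrow> bool" where
  "sw E tail head u v B \<longleftrightarrow> B \<noteq> [] \<and> set B \<subseteq> E \<and> tail (B!0) = v \<and>
     (\<forall>k<length B. head (B!k) = u \<longleftrightarrow> k = length B - 1) \<and>
     (\<forall>k. Suc k < length B \<longrightarrow> head (B!k) = tail (B!Suc k))"

lemma gw_append:
  assumes "pw E tail head u v A" "sw E tail head u v B"
  shows "gw E tail head u (A @ B)"
proof -
  have A: "A \<noteq> []" "set A \<subseteq> E" "tail (A!0) = u" "head (last A) = v"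
    "\<And>k. k<length A \<Longrightarrow> head (A!k) \<noteq> u"
    "\<And>k. Suc k < length A \<Longrightarrow> head (A!k) = tail (A!Suc k)"
    using assms(1) unfolding pw_def by auto
  have B: "B \<noteq> []" "set B \<subseteq> E" "tail (B!0) = v"
    "\<And>k. k<length B \<Longrightarrow> head (B!k) = u \<longleftrightarrow> k = length B - 1"
    "\<And>k. Suc k < length B \<Longrightarrow> head (B!k) = tail (B!Suc k)"
    using assms(2) unfolding sw_def by auto
  have h1: "head ((A@B)!k) = u \<longleftrightarrow> k = length (A@B) - 1" if "k < length (A@B)" for k
  proof (cases "k < length A")
    case True
    have "length B > 0" using B(1) by simp
    then have "k \<noteq> length (A@B) - 1" using True B(1) by (cases B) auto
    then show ?thesis using A(5)[OF True] True by (simp add: nth_append)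
  next
    case False
    then show ?thesis using B(4)[of "k - length A"] that by (auto simp: nth_append)
  qed
  have h2: "head ((A@B)!k) = tail ((A@B)!Suc k)" if "Suc k < length (A@B)" for k
  proof -
    consider "Suc k < length A" | "Suc k = length A" | "Suc k > length A" by linarith
    then show ?thesis
    proof cases
      case 1 then show ?thesis using A(6) by (simp add: nth_append)
    next
      case 2
      then have "k = length A - 1" by simp
      then show ?thesis using 2 A(1,4) B(3) by (simp add: nth_append last_conv_nth)
    next
      case 3
      then have "Suc (k - length A) < length B" using that by simp
      from B(5)[OF this] 3 show ?thesis by (simp add: nth_append Suc_diff_le)
    qed
  qed
  show ?thesis unfolding gw_def using A(1,2,3) B(2) h1 h2 by (auto simp: nth_append)
qed

lemma gw_split:
  assumes "gw E tail head u P" "k < length P" "head (P!k) = v" "v \<noteq> u"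
  shows "pw E tail head u v (take (Suc k) P) \<and> sw E tail head u v (drop (Suc k) P)"
proof -
  have P: "P \<noteq> []" "set P \<subseteq> E" "tail (P!0) = u"
    "\<And>k. k<length P \<Longrightarrow> head (P!k) = u \<longleftrightarrow> k = length P - 1"
    "\<And>k. Suc k < length P \<Longrightarrow> head (P!k) = tail (P!Suc k)"
    using assms(1) unfolding gw_def by auto
  have kl: "Suc k < length P" using P(4)[OF assms(2)] assms by auto
  have hh: "head (P!j) \<noteq> u" if "j < Suc k" for j
    using P(4)[of j] that kl by auto
  have "pw E tail head u v (take (Suc k) P)"
    unfolding pw_def using P kl assms hh
    by (auto simp: last_conv_nth dest: in_set_takeD)
  moreover have "sw E tail head u v (drop (Suc k) P)"
    unfolding sw_def using P kl assms
    by (auto simp: dest: in_set_dropD)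
  ultimately show ?thesis by blast
qed

fun wc :: "('e \<Rightarrow> real) \<Rightarrow> ('e \<Rightarrow> real) \<Rightarrow> 'e list \<Rightarrow> real" where
  "wc c \<gamma> [] = 0"
| "wc c \<gamma> (e # Q) = c e + \<gamma> e * wc c \<gamma> Q"

lemma wc_append: "wc c \<gamma> (A @ B) = wc c \<gamma> A + walk_gain \<gamma> A * wc c \<gamma> B"
  by (induction A) (auto simp: walk_gain_def algebra_simps)

lemma walk_gain_append: "walk_gain \<gamma> (A @ B) = walk_gain \<gamma> A * walk_gain \<gamma> B"
  by (simp add: walk_gain_def)

lemma walk_gain_pos: "\<forall>e\<in>E. 0 < \<gamma> e \<Longrightarrow> set Q \<subseteq> E \<Longrightarrow> 0 < walk_gain \<gamma> Q"
  by (induction Q) (auto simp: walk_gain_def)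

lemma wc_sum: "(\<Sum>k<length Q. c (Q!k) * prod_list (map \<gamma> (take k Q))) = wc c \<gamma> Q"
proof (induction Q)
  case Nil then show ?case by simp
next
  case (Cons a Q)
  have "(\<Sum>k<length (a#Q). c ((a#Q)!k) * prod_list (map \<gamma> (take k (a#Q))))
     = c a + (\<Sum>k<length Q. c (Q!k) * (\<gamma> a * prod_list (map \<gamma> (take k Q))))"
    by (simp only: length_Cons sum.lessThan_Suc_shift) simp
  also have "\<dots> = c a + \<gamma> a * (\<Sum>k<length Q. c (Q!k) * prod_list (map \<gamma> (take k Q)))"
    by (simp add: sum_distrib_left mult.left_commute)
  also have "\<dots> = c a + \<gamma> a * wc c \<gamma> Q"
    using Cons by simp
  finally show ?case by simp
qed

lemma sum_uf:
  assumes "finite S"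
  shows "(\<Sum>e\<in>S. f e * unit_flow \<gamma> Q e) =
    (\<Sum>k<length Q. if Q!k \<in> S then f (Q!k) * prod_list (map \<gamma> (take k Q)) else 0)"
proof -
  have "(\<Sum>e\<in>S. f e * unit_flow \<gamma> Q e) =
     (\<Sum>e\<in>S. \<Sum>k<length Q. if Q!k = e then f e * prod_list (map \<gamma> (take k Q)) else 0)"
    unfolding unit_flow_def by (simp add: sum_distrib_left if_distrib cong: if_cong)
  also have "\<dots> = (\<Sum>k<length Q. \<Sum>e\<in>S. if Q!k = e then f e * prod_list (map \<gamma> (take k Q)) else 0)"
    by (rule sum.swap)
  also have "\<dots> = (\<Sum>k<length Q. if Q!k \<in> S then f (Q!k) * prod_list (map \<gamma> (take k Q)) else 0)"
    using assms by (simp add: sum.delta')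
  finally show ?thesis .
qed


lemma gw_tail:
  assumes "gw E tail head u Q" "k < length Q"
  shows "tail (Q!k) = u \<longleftrightarrow> k = 0"
proof (cases k)
  case 0 then show ?thesis using assms unfolding gw_def by auto
next
  case (Suc j)
  have "head (Q!j) = tail (Q!k)" "head (Q!j) \<noteq> u"
    using assms Suc unfolding gw_def by auto
  then show ?thesis using Suc by auto
qed

lemma w_Suc: "k < length Q \<Longrightarrow>
  prod_list (map \<gamma> (take (Suc k) Q)) = (\<gamma> (Q!k)::real) * prod_list (map \<gamma> (take k Q))"
  by (simp add: take_Suc_conv_app_nth mult.commute)

lemma sum1: "(\<Sum>e\<in>S. x e) = (\<Sum>e\<in>S. (\<lambda>_. 1::real) e * x e)" by simp

lemma gw_in_D:
  assumes fin: "finite E" and pos: "\<forall>e\<in>E. 0 < \<gamma> e" and g: "gw E tail head u Q"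
  shows "in_D V E tail head \<gamma> u (unit_flow \<gamma> Q)"
proof -
  have QE: "set Q \<subseteq> E" and Qne: "Q \<noteq> []" using g unfolding gw_def by auto
  have QkE: "Q!k \<in> E" if "k < length Q" for k using QE that by auto
  let ?w = "\<lambda>k. prod_list (map \<gamma> (take k Q))"
  have wpos: "0 \<le> ?w k" for k
    using walk_gain_pos[OF pos, of "take k Q"] QE
    by (auto simp: walk_gain_def dest: in_set_takeD intro: less_imp_le)
  have nn: "0 \<le> unit_flow \<gamma> Q e" for e
    unfolding unit_flow_def using wpos by (auto intro: sum_nonneg)
  have s1: "(\<Sum>e\<in>{e\<in>E. tail e = u}. unit_flow \<gamma> Q e) = 1"
  proof -
    have "(\<Sum>e\<in>{e\<in>E. tail e = u}. unit_flow \<gamma> Q e)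
        = (\<Sum>k<length Q. if Q!k \<in> {e\<in>E. tail e = u} then 1 * ?w k else 0)"
      by (subst sum1) (rule sum_uf, simp add: fin)
    also have "\<dots> = (\<Sum>k<length Q. if k = 0 then 1 else 0)"
      by (rule sum.cong) (auto simp: QkE gw_tail[OF g])
    also have "\<dots> = 1" using Qne by simp
    finally show ?thesis .
  qed
  have cons: "(\<Sum>e\<in>{e\<in>E. tail e = v}. unit_flow \<gamma> Q e) -
      (\<Sum>e\<in>{e\<in>E. head e = v}. \<gamma> e * unit_flow \<gamma> Q e) = 0" if "v \<noteq> u" for v
  proof -
    obtain m where m: "length Q = Suc m" using Qne by (cases Q) auto
    have "(\<Sum>e\<in>{e\<in>E. tail e = v}. unit_flow \<gamma> Q e)
        = (\<Sum>k<length Q. if Q!k \<in> {e\<in>E. tail e = v} then 1 * ?w k else 0)"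
      by (subst sum1) (rule sum_uf, simp add: fin)
    also have "\<dots> = (\<Sum>k<Suc m. if tail (Q!k) = v then ?w k else 0)"
      using QkE m by (intro sum.cong) auto
    also have "\<dots> = (\<Sum>k<m. if tail (Q!Suc k) = v then ?w (Suc k) else 0)"
      using gw_tail[OF g, of 0] m that by (simp only: sum.lessThan_Suc_shift) simp
    finally have A: "(\<Sum>e\<in>{e\<in>E. tail e = v}. unit_flow \<gamma> Q e) =
       (\<Sum>k<m. if tail (Q!Suc k) = v then ?w (Suc k) else 0)" .
    have "(\<Sum>e\<in>{e\<in>E. head e = v}. \<gamma> e * unit_flow \<gamma> Q e)
        = (\<Sum>k<length Q. if Q!k \<in> {e\<in>E. head e = v} then \<gamma> (Q!k) * ?w k else 0)"
      by (rule sum_uf, simp add: fin)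
    also have "\<dots> = (\<Sum>k<Suc m. if head (Q!k) = v then ?w (Suc k) else 0)"
      using QkE m by (intro sum.cong) (auto simp: w_Suc)
    also have "\<dots> = (\<Sum>k<m. if head (Q!k) = v then ?w (Suc k) else 0)"
    proof -
      have "head (Q!m) = u" using g m unfolding gw_def by auto
      then show ?thesis using that by simp
    qed
    also have "\<dots> = (\<Sum>k<m. if tail (Q!Suc k) = v then ?w (Suc k) else 0)"
      using g m unfolding gw_def by (intro sum.cong) auto
    finally show ?thesis using A by simp
  qed
  show ?thesis unfolding in_D_def using nn s1 cons by auto
qed

lemma gw_obj:
  assumes fin: "finite E" and g: "gw E tail head u Q"
  shows "lp_obj E head c \<gamma> u \<delta> (unit_flow \<gamma> Q) = wc c \<gamma> Q + \<delta> * walk_gain \<gamma> Q - \<delta>"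
proof -
  have QE: "set Q \<subseteq> E" and Qne: "Q \<noteq> []" using g unfolding gw_def by auto
  have QkE: "Q!k \<in> E" if "k < length Q" for k using QE that by auto
  let ?w = "\<lambda>k. prod_list (map \<gamma> (take k Q))"
  obtain m where m: "length Q = Suc m" using Qne by (cases Q) auto
  have "(\<Sum>e\<in>E. c e * unit_flow \<gamma> Q e) = (\<Sum>k<length Q. if Q!k \<in> E then c (Q!k) * ?w k else 0)"
    by (rule sum_uf[OF fin])
  also have "\<dots> = (\<Sum>k<length Q. c (Q!k) * ?w k)"
    using QkE by (intro sum.cong) auto
  also have "\<dots> = wc c \<gamma> Q" by (rule wc_sum)
  finally have A: "(\<Sum>e\<in>E. c e * unit_flow \<gamma> Q e) = wc c \<gamma> Q" .
  have "(\<Sum>e\<in>{e\<in>E. head e = u}. \<gamma> e * unit_flow \<gamma> Q e)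
        = (\<Sum>k<length Q. if Q!k \<in> {e\<in>E. head e = u} then \<gamma> (Q!k) * ?w k else 0)"
    by (rule sum_uf, simp add: fin)
  also have "\<dots> = (\<Sum>k<Suc m. if k = m then \<gamma> (Q!k) * ?w k else 0)"
    using QkE m g unfolding gw_def by (intro sum.cong) auto
  also have "\<dots> = \<gamma> (Q!m) * ?w m" by simp
  also have "\<dots> = ?w (Suc m)" using w_Suc[of m Q \<gamma>] m by simp
  also have "\<dots> = walk_gain \<gamma> Q" using m by (simp add: walk_gain_def)
  finally show ?thesis unfolding lp_obj_def using A by simp
qed


lemma arith_key:
  fixes ai aj bi bj cAi cAj cBi cBj di dj :: real
  assumes "ai > 0" "aj > 0" "bi > 0" "di > dj"
    and h1: "cAi + ai*cBi + di*(ai*bi) \<le> cAj + aj*cBi + di*(aj*bi)"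
    and h2: "cAj + aj*cBj + dj*(aj*bj) \<le> cAi + ai*cBj + dj*(ai*bj)"
    and h3: "cAj + aj*cBj + dj*(aj*bj) \<le> cAj + aj*cBi + dj*(aj*bi)"
  shows "ai \<le> aj"
proof (rule ccontr)
  assume "\<not> ai \<le> aj"
  then have gt: "ai - aj > 0" by simp
  define mi where "mi = cBi + di*bi"
  define mj where "mj = cBj + dj*bj"
  have "aj * mj \<le> aj * (cBi + dj*bi)" using h3 unfolding mj_def by (simp add: distrib_left mult.assoc mult.left_commute)
  then have "mj \<le> cBi + dj*bi" using assms(2) by (rule mult_left_le_imp_le)
  moreover have "(di - dj) * bi > 0" using assms by simp
  ultimately have "mi - mj > 0" unfolding mi_def by (simp add: left_diff_distrib)
  then have "(ai - aj) * (mi - mj) > 0" using gt by (rule mult_pos_pos[rotated])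
  moreover have "cAi + ai*mi \<le> cAj + aj*mi" using h1 unfolding mi_def by (simp add: distrib_left mult.assoc mult.left_commute)
  moreover have "cAj + aj*mj \<le> cAi + ai*mj" using h2 unfolding mj_def by (simp add: distrib_left mult.assoc mult.left_commute)
  moreover have "(ai - aj) * (mi - mj) = (ai*mi + aj*mj) - (aj*mi + ai*mj)"
    by (simp add: algebra_simps)
  ultimately show False by linarith
qed

lemma split_gw:
  assumes "is_split_path E tail head u P"
  shows "gw E tail head u P"
proof -
  have P: "P \<noteq> []" "set P \<subseteq> E" "tail (P!0) = u" "head (last P) = u"
    "\<And>k. Suc k < length P \<Longrightarrow> head (P!k) \<noteq> u \<and> head (P!k) = tail (P!Suc k)"
    using assms unfolding is_split_path_def split_head_def split_tail_def
    by (auto split: if_splits)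
  have "head (P!k) = u \<longleftrightarrow> k = length P - 1" if "k < length P" for k
  proof (cases "Suc k < length P")
    case True then show ?thesis using P(5)[OF True] by auto
  next
    case False
    then have "k = length P - 1" using that by simp
    then show ?thesis using P(1,4) by (simp add: last_conv_nth)
  qed
  then show ?thesis unfolding gw_def using P by auto
qed

lemma decomp:
  assumes g: "gw E tail head u Q" and v: "v \<noteq> u" "v \<in> head ` set Q"
  shows "\<exists>B. pw E tail head u v (subpath_to head Q v) \<and> sw E tail head u v B \<and>
             Q = subpath_to head Q v @ B"
proof -
  define k where "k = (LEAST k. k < length Q \<and> head (Q ! k) = v)"
  have ex: "\<exists>k. k < length Q \<and> head (Q ! k) = v" using v(2) by (auto simp: in_set_conv_nth)
  have k: "k < length Q \<and> head (Q ! k) = v" unfolding k_def by (rule LeastI_ex[OF ex])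
  have st: "subpath_to head Q v = take (Suc k) Q" unfolding subpath_to_def k_def ..
  show ?thesis using gw_split[OF g _ _ v(1), of k] k st
    by (intro exI[of _ "drop (Suc k) Q"]) auto
qed

theorem lemma4p10:
  fixes V :: "'v set" and E :: "'e set" and tail head :: "'e \<Rightarrow> 'v"
    and c \<gamma> :: "'e \<Rightarrow> real" and u :: 'v
    and l :: nat and \<delta> :: "nat \<Rightarrow> real" and P :: "nat \<Rightarrow> 'e list"
  assumes "finite V" and "finite E"
    and "\<forall>e\<in>E. tail e \<in> V \<and> head e \<in> V"
    and "\<forall>e\<in>E. 0 < \<gamma> e"
    and "u \<in> V"
    and "\<forall>i j. i < j \<and> j < l \<longrightarrow> \<delta> j < \<delta> i"
    and "\<forall>i<l. is_split_path E tail head u (P i)"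
    and "\<forall>i<l. lp_optimal V E tail head c \<gamma> u (\<delta> i) (unit_flow \<gamma> (P i))"
  shows "subpath_monotone head \<gamma> u l P"
  unfolding subpath_monotone_def
proof (intro allI impI)
  fix i j v
  assume H: "i < j \<and> j < l \<and> v \<noteq> u \<and> v \<in> head ` set (P i) \<and> v \<in> head ` set (P j)"
  have il: "i < l" and jl: "j < l" using H by auto
  have gi: "gw E tail head u (P i)" using split_gw assms(7)[rule_format, OF il] .
  have gj: "gw E tail head u (P j)" using split_gw assms(7)[rule_format, OF jl] .
  define Ai where "Ai = subpath_to head (P i) v"
  define Aj where "Aj = subpath_to head (P j) v"
  obtain Bi where Bi: "pw E tail head u v Ai" "sw E tail head u v Bi" "P i = Ai @ Bi"
    using decomp[OF gi, of v] H unfolding Ai_def by blast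
  obtain Bj where Bj: "pw E tail head u v Aj" "sw E tail head u v Bj" "P j = Aj @ Bj"
    using decomp[OF gj, of v] H unfolding Aj_def by blast
  have fin: "finite E" by fact
  have pos: "\<forall>e\<in>E. 0 < \<gamma> e" by fact
  have sAi: "set Ai \<subseteq> E" using Bi(1) unfolding pw_def by auto
  have sAj: "set Aj \<subseteq> E" using Bj(1) unfolding pw_def by auto
  have sBi: "set Bi \<subseteq> E" using Bi(2) unfolding sw_def by auto
  have optI: "\<And>y. in_D V E tail head \<gamma> u y \<Longrightarrow>
     lp_obj E head c \<gamma> u (\<delta> i) (unit_flow \<gamma> (P i)) \<le> lp_obj E head c \<gamma> u (\<delta> i) y"
    using assms(8) il unfolding lp_optimal_def by blast
  have optJ: "\<And>y. in_D V E tail head \<gamma> u y \<Longrightarrow>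
     lp_obj E head c \<gamma> u (\<delta> j) (unit_flow \<gamma> (P j)) \<le> lp_obj E head c \<gamma> u (\<delta> j) y"
    using assms(8) jl unfolding lp_optimal_def by blast
  have gii: "gw E tail head u (Ai @ Bi)" using gw_append[OF Bi(1) Bi(2)] .
  have gjj: "gw E tail head u (Aj @ Bj)" using gw_append[OF Bj(1) Bj(2)] .
  have gji: "gw E tail head u (Aj @ Bi)" using gw_append[OF Bj(1) Bi(2)] .
  have gij: "gw E tail head u (Ai @ Bj)" using gw_append[OF Bi(1) Bj(2)] .
  have e1: "lp_obj E head c \<gamma> u (\<delta> i) (unit_flow \<gamma> (Ai @ Bi)) \<le> lp_obj E head c \<gamma> u (\<delta> i) (unit_flow \<gamma> (Aj @ Bi))"
    using optI[OF gw_in_D[OF fin pos gji]] Bi(3) by simp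
  have e2: "lp_obj E head c \<gamma> u (\<delta> j) (unit_flow \<gamma> (Aj @ Bj)) \<le> lp_obj E head c \<gamma> u (\<delta> j) (unit_flow \<gamma> (Ai @ Bj))"
    using optJ[OF gw_in_D[OF fin pos gij]] Bj(3) by simp
  have e3: "lp_obj E head c \<gamma> u (\<delta> j) (unit_flow \<gamma> (Aj @ Bj)) \<le> lp_obj E head c \<gamma> u (\<delta> j) (unit_flow \<gamma> (Aj @ Bi))"
    using optJ[OF gw_in_D[OF fin pos gji]] Bj(3) by simp
  note ob = gw_obj[OF fin gii] gw_obj[OF fin gjj] gw_obj[OF fin gji] gw_obj[OF fin gij]
  have "walk_gain \<gamma> Ai \<le> walk_gain \<gamma> Aj"
  proof (rule arith_key)
    show "walk_gain \<gamma> Ai > 0" using walk_gain_pos[OF pos sAi] .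
    show "walk_gain \<gamma> Aj > 0" using walk_gain_pos[OF pos sAj] .
    show "walk_gain \<gamma> Bi > 0" using walk_gain_pos[OF pos sBi] .
    show "\<delta> i > \<delta> j" using assms(6) H by blast
  next
    show "wc c \<gamma> Ai + walk_gain \<gamma> Ai * wc c \<gamma> Bi + \<delta> i * (walk_gain \<gamma> Ai * walk_gain \<gamma> Bi)
      \<le> wc c \<gamma> Aj + walk_gain \<gamma> Aj * wc c \<gamma> Bi + \<delta> i * (walk_gain \<gamma> Aj * walk_gain \<gamma> Bi)"
      using e1 ob by (simp add: wc_append walk_gain_append)
    show "wc c \<gamma> Aj + walk_gain \<gamma> Aj * wc c \<gamma> Bj + \<delta> j * (walk_gain \<gamma> Aj * walk_gain \<gamma> Bj)
      \<le> wc c \<gamma> Ai + walk_gain \<gamma> Ai * wc c \<gamma> Bj + \<delta> j * (walk_gain \<gamma> Ai * walk_gain \<gamma> Bj)"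
      using e2 ob by (simp add: wc_append walk_gain_append)
    show "wc c \<gamma> Aj + walk_gain \<gamma> Aj * wc c \<gamma> Bj + \<delta> j * (walk_gain \<gamma> Aj * walk_gain \<gamma> Bj)
      \<le> wc c \<gamma> Aj + walk_gain \<gamma> Aj * wc c \<gamma> Bi + \<delta> j * (walk_gain \<gamma> Aj * walk_gain \<gamma> Bi)"
      using e3 ob by (simp add: wc_append walk_gain_append)
  qed
  then show "walk_gain \<gamma> (subpath_to head (P i) v) \<le> walk_gain \<gamma> (subpath_to head (P j) v)"
    unfolding Ai_def Aj_def .
qed

end
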